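(* Let $(\Sigma_+,\Sigma_-,N_1,N_2,N_3)$ be a solution of the Wainwright–Hsu system satisfying the constraint, with $N_1=0$, $N_2,N_3>0$, and $\Sigma_-^2+(N_2-N_3)^2>0$. Then there is $n_0\in(0,\infty)$ such that $\lim_{\tau\to\infty}N_2(\tau)=\lim_{\tau\to\infty}N_3(\tau)=n_0$.
   Context: Wainwright–Hsu system: for functions $N_1,N_2,N_3,\Sigma_+,\Sigma_-$ of $\tau\in\mathbb{R}$ (prime denotes $d/d\tau$), $N_1'=(q-4\Sigma_+)N_1$, $N_2'=(q+2\Sigma_++2\sqrt3\Sigma_-)N_2$, $N_3'=(q+2\Sigma_+-2\sqrt3\Sigma_-)N_3$, $\Sigma_+'=-(2-q)\Sigma_+-3S_+$, $\Sigma_-'=-(2-q)\Sigma_--3S_-$, where $q=2(\Sigma_+^2+\Sigma_-^2)$, $S_+=\frac12[(N_2-N_3)^2-N_1(2N_1-N_2-N_3)]$, $S_-=\frac{\sqrt3}{2}(N_3-N_2)(N_1-N_2-N_3)$, together with the constraint $\Sigma_+^2+\Sigma_-^2+\frac34[N_1^2+N_2^2+N_3^2-2(N_1N_2+N_2N_3+N_1N_3)]=1$. Solutions exist for all $\tau\in\mathbb{R}$; the condition $\Sigma_-^2+(N_2-N_3)^2>0$ is preserved by the flow. *)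

theory Defs
  imports "HOL-Analysis.Analysis"
begin

definition wh_q :: "real \<Rightarrow> real \<Rightarrow> real" where
  "wh_q sp sm = 2 * (sp^2 + sm^2)"

definition wh_Splus :: "real \<Rightarrow> real \<Rightarrow> real \<Rightarrow> real" where
  "wh_Splus n1 n2 n3 = (1/2) * ((n2 - n3)^2 - n1 * (2*n1 - n2 - n3))"

definition wh_Sminus :: "real \<Rightarrow> real \<Rightarrow> real \<Rightarrow> real" where
  "wh_Sminus n1 n2 n3 = (sqrt 3 / 2) * (n3 - n2) * (n1 - n2 - n3)"

definition WH_solution ::
  "(real \<Rightarrow> real) \<Rightarrow> (real \<Rightarrow> real) \<Rightarrow> (real \<Rightarrow> real) \<Rightarrow> (real \<Rightarrow> real) \<Rightarrow> (real \<Rightarrow> real) \<Rightarrow> bool" where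
  "WH_solution N1 N2 N3 Sp Sm \<longleftrightarrow> (\<forall>t::real.
     let q = wh_q (Sp t) (Sm t);
         SP = wh_Splus (N1 t) (N2 t) (N3 t);
         SM = wh_Sminus (N1 t) (N2 t) (N3 t) in
     (N1 has_real_derivative ((q - 4 * Sp t) * N1 t)) (at t) \<and>
     (N2 has_real_derivative ((q + 2 * Sp t + 2 * sqrt 3 * Sm t) * N2 t)) (at t) \<and>
     (N3 has_real_derivative ((q + 2 * Sp t - 2 * sqrt 3 * Sm t) * N3 t)) (at t) \<and>
     (Sp has_real_derivative (- (2 - q) * Sp t - 3 * SP)) (at t) \<and>
     (Sm has_real_derivative (- (2 - q) * Sm t - 3 * SM)) (at t) \<and>
     (Sp t)^2 + (Sm t)^2 + (3/4) * ((N1 t)^2 + (N2 t)^2 + (N3 t)^2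
        - 2 * (N1 t * N2 t + N2 t * N3 t + N1 t * N3 t)) = 1)"

end

theory Submission
  imports Defs
begin



lemma lin1: fixes P Q R :: real shows "0 \<le> P + 3/32*Q \<Longrightarrow> Q \<le> 64/9*R \<Longrightarrow> 0 \<le> R \<Longrightarrow> 0 \<le> 2*R + P" by linarith

lemma Mpos:
  fixes x y D S s :: real
  assumes s: "s * s = 3" "s > 0" and c: "x^2+y^2+3/4*D^2 = 1" and S: "S > 0" and r: "1+x>0"
  shows "0 \<le> 4*(1+x) - 3/2*D^2 - 2*y^2 + s/2*y*D^3/S + 2*y^2*D^2/S^2"
proof -
  define w where "w = y*D/S"
  have e1: "s/2*y*D^3/S = s/2*w*D^2" unfolding w_def using S by (simp add: power3_eq_cube power2_eq_square field_simps)
  have e2: "2*y^2*D^2/S^2 = 2*w^2" unfolding w_def using S by (simp add: power2_eq_square field_simps)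
  have e3: "4*(1+x) - 3/2*D^2 - 2*y^2 = 2 + 4*x + 2*x^2" using c by (simp add: algebra_simps)
  have e4: "2*(w + s/8*D^2)^2 = 2*w^2 + s/2*w*D^2 + (s * s)/32*(D^2)^2" by (simp add: power2_eq_square field_simps)
  have D2: "D^2 \<le> 8/3*(1+x)"
  proof -
    have "D^2 = 4/3*(1 - x^2 - y^2)" using c by (simp add: field_simps)
    also have "\<dots> \<le> 4/3*(1-x^2)" by simp
    also have "\<dots> \<le> 8/3*(1+x)"
    proof -
      have "0 \<le> (1+x)^2" by simp
      then show ?thesis by (simp add: power2_eq_square field_simps)
    qed
    finally show ?thesis .
  qed
  have D4: "(D^2)^2 \<le> (8/3*(1+x))^2"
    by (rule power_mono[OF D2]) simp
  have h1: "0 \<le> (s/2*w*D^2 + 2*w^2) + 3/32*(D^2)^2" using e4 s(1)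
    by (metis (no_types, lifting) add.commute mult_2 zero_le_power2 add.assoc zero_le_mult_iff zero_le_numeral)
  have h2: "(D^2)^2 \<le> 64/9*(1+x)^2" 
  proof -
    have "(8/3*(1+x))^2 = 64/9*(1+x)^2" by (simp add: power2_eq_square algebra_simps)
    then show ?thesis using D4 by linarith
  qed
  have h3: "4*(1+x) - 3/2*D^2 - 2*y^2 = 2*(1+x)^2" using e3 by (simp add: power2_eq_square algebra_simps)
  have "0 \<le> 4*(1+x) - 3/2*D^2 - 2*y^2 + (s/2*w*D^2 + 2*w^2)" unfolding h3 using lin1[OF h1 h2] by simp
  then show ?thesis unfolding e1 e2 by (simp add: algebra_simps)
qed


lemma basic_bounds:
  fixes x y D :: real
  assumes c: "x^2+y^2+3/4*D^2 = 1" and r: "1+x>0"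
  shows "y^2 \<le> 2*(1+x)" "D^2 \<le> 8/3*(1+x)" "y^2 + 3/4*D^2 = (1-x)*(1+x)"
proof -
  have e: "y^2 + 3/4*D^2 = 1 - x^2" using c by (simp add: field_simps)
  have f: "(1-x)*(1+x) = 1 - x^2" by (simp add: power2_eq_square algebra_simps)
  have g: "(1+x)^2 = 1 + 2*x + x^2" by (simp add: power2_eq_square algebra_simps)
  have h: "0 \<le> (1+x)^2" "0 \<le> y^2" "0 \<le> D^2" by simp_all
  show "y^2 \<le> 2*(1+x)" using e g h by (simp only: ring_distribs; linarith)
  show "D^2 \<le> 8/3*(1+x)" using e g h by (simp only: ring_distribs; linarith)
  show "y^2 + 3/4*D^2 = (1-x)*(1+x)" using e f by simp
qed

lemma lin3: fixes E P W Q R K :: real shows "E = 2*R \<Longrightarrow> 2*P \<le> W + Q \<Longrightarrow> W \<le> 4/3*K \<Longrightarrow> Q \<le> 64/9*R \<Longrightarrow> 0 \<le> K \<Longrightarrow> 0 \<le> R \<Longrightarrow> E + P + 2*W \<le> 6*R + 4*K" by linarith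

lemma Mup:
  fixes x y D S s c :: real
  assumes s: "s * s = 3" "s > 0" and cn: "x^2+y^2+3/4*D^2 = 1" and S: "S > 0" and r: "1+x>0"
    and c: "c > 0" "4*c \<le> S^2"
  shows "4*(1+x) - 3/2*D^2 - 2*y^2 + s/2*y*D^3/S + 2*y^2*D^2/S^2 \<le> (6 + 4/c)*(1+x)^2"
proof -
  define w where "w = y*D/S"
  define R where "R = (1+x)^2"
  have e1: "s/2*y*D^3/S = s/2*w*D^2" unfolding w_def using S by (simp add: power3_eq_cube power2_eq_square field_simps)
  have e2: "2*y^2*D^2/S^2 = 2*w^2" unfolding w_def using S by (simp add: power2_eq_square field_simps)
  have e3: "4*(1+x) - 3/2*D^2 - 2*y^2 = 2*R" unfolding R_def using cn by (simp add: power2_eq_square algebra_simps)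
  note bb = basic_bounds[OF cn r]
  have yD: "y^2*D^2 \<le> 16/3*R"
  proof -
    have "y^2*D^2 \<le> (2*(1+x))*(8/3*(1+x))" by (rule mult_mono[OF bb(1) bb(2)]) (use r in auto)
    also have "\<dots> = 16/3*R" unfolding R_def by (simp add: power2_eq_square algebra_simps)
    finally show ?thesis .
  qed
  have Q: "(D^2)^2 \<le> 64/9*R"
  proof -
    have "(D^2)^2 \<le> (8/3*(1+x))^2" by (rule power_mono[OF bb(2)]) simp
    also have "\<dots> = 64/9*R" unfolding R_def by (simp add: power2_eq_square algebra_simps)
    finally show ?thesis .
  qed
  have w2: "w^2 \<le> 4/3*(R/c)"
  proof -
    have S2: "0 < S^2" using c by linarith
    have "w^2 = y^2*D^2/S^2" unfolding w_def by (simp add: power2_eq_square)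
    also have "y^2*D^2/S^2 \<le> y^2*D^2/(4*c)" by (rule divide_left_mono) (use c S2 in auto)
    also have "\<dots> \<le> (16/3*R)/(4*c)" by (rule divide_right_mono[OF yD]) (use c in auto)
    also have "\<dots> = 4/3*(R/c)" by simp
    finally show ?thesis .
  qed
  have am: "2*(s/2*w*D^2) \<le> w^2 + (D^2)^2"
  proof -
    have s2: "s \<le> 2"
    proof (rule ccontr)
      assume "\<not> s \<le> 2"
      then have "2*2 < s * s" by (intro mult_strict_mono) auto
      with s(1) show False by simp
    qed
    have wa: "w*D^2 \<le> \<bar>w\<bar>*D^2" by (rule mult_right_mono) auto
    have "s/2*w*D^2 \<le> s/2*(\<bar>w\<bar>*D^2)" using mult_left_mono[OF wa, of "s/2"] s(2) by (simp add: mult.assoc)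
    also have "\<dots> \<le> 1*(\<bar>w\<bar>*D^2)" by (rule mult_right_mono) (use s2 in auto)
    finally have m1: "s/2*w*D^2 \<le> \<bar>w\<bar>*D^2" by simp
    have m2: "2*(\<bar>w\<bar>*D^2) \<le> w^2 + (D^2)^2"
    proof -
      have "0 \<le> (\<bar>w\<bar> - D^2)^2" by simp
      then show ?thesis by (simp add: power2_eq_square algebra_simps abs_mult_self_eq)
    qed
    show ?thesis using m1 m2 by linarith
  qed
  have Rc: "0 \<le> R/c" "0 \<le> R" unfolding R_def using c by auto
  have fin: "(6 + 4/c)*(1+x)^2 = 6*R + 4*(R/c)" unfolding R_def by (simp add: algebra_simps)
  show ?thesis unfolding e1 e2 fin by (rule lin3[OF e3 am w2 Q Rc])
qed

lemma lin2: fixes A B :: real shows "A \<le> B/2 \<Longrightarrow> B/2 \<le> B - A" by linarith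

lemma Glow:
  fixes x y D S :: real
  assumes cn: "x^2+y^2+3/4*D^2 = 1" and r: "1+x>0" and x1: "x < 1" and S: "4/3*(1+x) \<le> S^2"
  shows "(1 - x)/2 \<le> (y^2 + 3/4*D^2)/(1+x) - y^2*D^2/(S^2*(1+x))"
proof -
  note bb = basic_bounds[OF cn r]
  have a: "(y^2 + 3/4*D^2)/(1+x) = 1 - x" unfolding bb(3) using r by simp
  have b: "3*(y^2*D^2) \<le> (y^2 + 3/4*D^2)^2"
  proof -
    have "0 \<le> (y^2 - 3/4*D^2)^2" by simp
    then show ?thesis by (simp add: power2_eq_square algebra_simps)
  qed
  have Spos: "0 < S^2" using S r by (simp only: ring_distribs; linarith)
  have b': "y^2*D^2 \<le> ((1-x)*(1+x))^2/3" using b unfolding bb(3) by simp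
  have S0: "0 \<le> S^2*(1+x)" using Spos r by simp
  have "y^2*D^2/(S^2*(1+x)) \<le> ((1-x)*(1+x))^2/3/(S^2*(1+x))"
    by (rule divide_right_mono[OF b' S0])
  also have "\<dots> \<le> ((1-x)*(1+x))^2/3/(4/3*(1+x)*(1+x))"
    by (rule divide_left_mono) (use S r in \<open>auto intro!: mult_right_mono mult_pos_pos\<close>)
  also have "\<dots> = (1-x)^2/4"
  proof -
    define u where "u = 1 + x"
    have u: "u \<noteq> 0" "1 - x = 2 - u" using r unfolding u_def by auto
    show ?thesis unfolding u(2) u_def[symmetric] using u(1) by (simp add: power2_eq_square field_simps)
  qed
  also have "\<dots> \<le> (1-x)/2"
  proof -
    have "(1-x)*(1-x) \<le> 2*(1-x)" by (rule mult_right_mono) (use r x1 in auto)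
    then show ?thesis by (simp add: power2_eq_square)
  qed
  finally show ?thesis unfolding a by (rule lin2)
qed

lemma derivs:
 fixes N2 N3 x y :: "real \<Rightarrow> real"
 assumes dN2: "\<And>t. (N2 has_real_derivative ((2 - 3/2*(N2 t - N3 t)^2 + 2*x t + 2 * sqrt 3 * y t)*N2 t)) (at t)"
 and dN3: "\<And>t. (N3 has_real_derivative ((2 - 3/2*(N2 t - N3 t)^2 + 2*x t - 2 * sqrt 3 * y t)*N3 t)) (at t)"
 and dx: "\<And>t. (x has_real_derivative (-(3/2)*(N2 t - N3 t)^2 * (1 + x t))) (at t)"
 and dy: "\<And>t. (y has_real_derivative (-(3/2)*(N2 t - N3 t)^2*y t - (3 * sqrt 3/2)*(N2 t - N3 t)*(N2 t + N3 t))) (at t)"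
 and pos: "\<And>t. N2 t > 0" "\<And>t. N3 t > 0" and rp: "\<And>t. 1 + x t > 0"
 shows "((\<lambda>t. 1/(1 + x t) + y t * (N2 t - N3 t) / (2 * sqrt 3 * (1 + x t) * (N2 t + N3 t))) has_real_derivative
     (y t^2 + 3/4*(N2 t - N3 t)^2)/(1 + x t) - y t^2 * (N2 t - N3 t)^2 / ((N2 t + N3 t)^2 * (1 + x t))) (at t)"
   "((\<lambda>t. ln (N2 t * N3 t) - 2 * ln (1 + x t)) has_real_derivative 4*(1 + x t)) (at t)"
   "((\<lambda>t. ln (N2 t * N3 t) - y t * (N2 t - N3 t) / (sqrt 3 * (N2 t + N3 t))) has_real_derivative
     4*(1 + x t) - 3/2*(N2 t - N3 t)^2 - 2*y t^2 + sqrt 3/2 * y t * (N2 t - N3 t)^3/(N2 t + N3 t) + 2 * y t^2 * (N2 t - N3 t)^2/(N2 t + N3 t)^2) (at t)"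
proof -
  have p23: "\<And>t. 0 < N2 t * N3 t" using pos by simp
  have nz: "\<And>t. 2 * sqrt 3 * (1 + x t) * (N2 t + N3 t) \<noteq> 0" by (metis pos rp add_pos_pos less_irrefl mult_eq_0_iff real_sqrt_eq_zero_cancel_iff zero_neq_numeral)
  have nz3: "\<And>t. sqrt 3 * (N2 t + N3 t) \<noteq> 0" by (metis pos add_pos_pos less_irrefl mult_eq_0_iff real_sqrt_eq_zero_cancel_iff zero_neq_numeral)
  have nz2: "\<And>t. (1 + x t) \<noteq> 0" by (metis rp less_irrefl)
  have nzS: "N2 t + N3 t \<noteq> 0" by (metis pos add_pos_pos less_irrefl)
  have nz23: "N2 t \<noteq> 0" "N3 t \<noteq> 0" using pos[of t] by auto
  have nzs: "sqrt 3 \<noteq> 0" "sqrt 3 * sqrt 3 = 3" by auto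
  show "((\<lambda>t. 1/(1 + x t) + y t * (N2 t - N3 t) / (2 * sqrt 3 * (1 + x t) * (N2 t + N3 t))) has_real_derivative
     (y t^2 + 3/4*(N2 t - N3 t)^2)/(1 + x t) - y t^2 * (N2 t - N3 t)^2 / ((N2 t + N3 t)^2 * (1 + x t))) (at t)"
  apply (rule derivative_eq_intros dN2 dN3 dx dy refl p23 nz nz2 rp)+
  using nz2[of t] nzS nzs apply (simp add: divide_simps)
  apply algebra
  done
  show "((\<lambda>t. ln (N2 t * N3 t) - 2 * ln (1 + x t)) has_real_derivative 4*(1 + x t)) (at t)"
  apply (rule derivative_eq_intros dN2 dN3 dx dy refl p23 nz nz2 rp)+
  using nz2[of t] nzS nzs p23[of t] nz23 apply (simp add: divide_simps)
  apply algebra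
  done
  show "((\<lambda>t. ln (N2 t * N3 t) - y t * (N2 t - N3 t) / (sqrt 3 * (N2 t + N3 t))) has_real_derivative
     4*(1 + x t) - 3/2*(N2 t - N3 t)^2 - 2*y t^2 + sqrt 3/2 * y t * (N2 t - N3 t)^3/(N2 t + N3 t) + 2 * y t^2 * (N2 t - N3 t)^2/(N2 t + N3 t)^2) (at t)"
  apply (rule derivative_eq_intros dN2 dN3 dx dy refl p23 nz3 nz2 rp)+
  using nz2[of t] nzS nzs p23[of t] nz23 apply (simp add: divide_simps)
  using nzs(2) apply algebra
  done
qed

lemma mono_up:
  fixes f f' :: "real \<Rightarrow> real"
  assumes "\<And>t. a \<le> t \<Longrightarrow> (f has_real_derivative f' t) (at t)" "\<And>t. a \<le> t \<Longrightarrow> 0 \<le> f' t" "a \<le> u" "u \<le> v"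
  shows "f u \<le> f v"
proof (rule DERIV_nonneg_imp_nondecreasing[OF assms(4)])
  fix z assume z: "u \<le> z" "z \<le> v"
  then have "a \<le> z" using assms(3) by linarith
  then show "\<exists>y. (f has_real_derivative y) (at z) \<and> 0 \<le> y" using assms(1)[of z] assms(2)[of z] by blast
qed

lemma mono_down:
  fixes f f' :: "real \<Rightarrow> real"
  assumes "\<And>t. a \<le> t \<Longrightarrow> (f has_real_derivative f' t) (at t)" "\<And>t. a \<le> t \<Longrightarrow> f' t \<le> 0" "a \<le> u" "u \<le> v"
  shows "f v \<le> f u"
proof (rule DERIV_nonpos_imp_nonincreasing[OF assms(4)])
  fix z assume z: "u \<le> z" "z \<le> v"
  then have "a \<le> z" using assms(3) by linarith
  then show "\<exists>y. (f has_real_derivative y) (at z) \<and> y \<le> 0" using assms(1)[of z] assms(2)[of z] by blast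
qed

lemma abs_le_sqrt: fixes a b :: real assumes "a^2 \<le> b" shows "\<bar>a\<bar> \<le> sqrt b"
  using real_le_rsqrt[of "\<bar>a\<bar>" b] assms by simp

lemma Gform_gen: fixes r y D S s :: real assumes "r \<noteq> 0" "S \<noteq> 0" "s \<noteq> 0"
  shows "1/r + y*D/(2 * s * r * S) = (1 + (y*D/S)/(2 * s))/r"
  using assms by (simp add: field_simps)

lemma core:
 fixes N2 N3 x y :: "real \<Rightarrow> real"
 assumes dN2: "\<And>t. (N2 has_real_derivative ((2 - 3/2*(N2 t - N3 t)^2 + 2*x t + 2 * sqrt 3 * y t)*N2 t)) (at t)"
 and dN3: "\<And>t. (N3 has_real_derivative ((2 - 3/2*(N2 t - N3 t)^2 + 2*x t - 2 * sqrt 3 * y t)*N3 t)) (at t)"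
 and dx: "\<And>t. (x has_real_derivative (-(3/2)*(N2 t - N3 t)^2 * (1 + x t))) (at t)"
 and dy: "\<And>t. (y has_real_derivative (-(3/2)*(N2 t - N3 t)^2*y t - (3 * sqrt 3/2)*(N2 t - N3 t)*(N2 t + N3 t))) (at t)"
 and pos2: "\<And>t. N2 t > 0" and pos3: "\<And>t. N3 t > 0"
 and con: "\<And>t. x t^2 + y t^2 + 3/4*(N2 t - N3 t)^2 = 1"
 and nd: "\<And>t. y t^2 + (N2 t - N3 t)^2 > 0"
 shows "\<exists>n0>0. (N2 \<longlongrightarrow> n0) at_top \<and> (N3 \<longlongrightarrow> n0) at_top"
proof -
  have s3: "sqrt 3 * sqrt 3 = 3" "sqrt 3 > 0" "1 \<le> sqrt 3" by auto
  have xb: "-1 < x t \<and> x t < 1" for t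
  proof -
    have "0 \<le> y t^2" "0 \<le> (N2 t - N3 t)^2" by simp_all
    then have "0 < y t^2 + 3/4*(N2 t - N3 t)^2" using nd[of t] by linarith
    then have "x t^2 < 1" using con[of t] by linarith
    then have "\<bar>x t\<bar> < 1" by (simp add: abs_square_less_1)
    then show ?thesis by (auto simp: abs_less_iff)
  qed
  have rp: "0 < 1 + x t" for t using xb[of t] by linarith
  have Spos: "0 < N2 t + N3 t" for t using pos2[of t] pos3[of t] by linarith
  have Pp: "0 < N2 t * N3 t" for t using pos2[of t] pos3[of t] by simp
  have S4: "4 * (N2 t * N3 t) \<le> (N2 t + N3 t)^2" for t
  proof -
    have "0 \<le> (N2 t - N3 t)^2" by simp
    then show ?thesis by (simp add: power2_eq_square algebra_simps)
  qed
  note der = derivs[OF dN2 dN3 dx dy pos2 pos3 rp]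
  define W where "W = (\<lambda>t. y t * (N2 t - N3 t) / (N2 t + N3 t))"
  have Wy: "\<bar>W t\<bar> \<le> \<bar>y t\<bar>" for t
  proof -
    have "\<bar>N2 t - N3 t\<bar> \<le> N2 t + N3 t" using pos2[of t] pos3[of t] by linarith
    then have q1: "\<bar>N2 t - N3 t\<bar> / (N2 t + N3 t) \<le> 1" using Spos[of t] by simp
    have "\<bar>y t\<bar> * (\<bar>N2 t - N3 t\<bar> / (N2 t + N3 t)) \<le> \<bar>y t\<bar>" by (rule mult_left_le[OF q1]) simp
    then show ?thesis unfolding W_def using Spos[of t] by (simp add: abs_mult abs_divide)
  qed
  have y1: "\<bar>y t\<bar> \<le> 1" for t
  proof -
    have "0 \<le> x t^2" "0 \<le> (N2 t - N3 t)^2" by simp_all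
    then have "y t^2 \<le> 1" using con[of t] by linarith
    then show ?thesis by (simp add: abs_square_le_1)
  qed
  have W1: "\<bar>W t\<bar> \<le> 1" for t using Wy[of t] y1[of t] by linarith
  have bb: "y t^2 \<le> 2*(1 + x t)" "(N2 t - N3 t)^2 \<le> 8/3*(1 + x t)" for t
    using basic_bounds[OF con[of t] rp[of t]] by auto

  define M where "M = (\<lambda>t. ln (N2 t * N3 t) - y t * (N2 t - N3 t) / (sqrt 3 * (N2 t + N3 t)))"
  define M' where "M' = (\<lambda>t. 4*(1 + x t) - 3/2*(N2 t - N3 t)^2 - 2*y t^2 + sqrt 3/2 * y t * (N2 t - N3 t)^3/(N2 t + N3 t) + 2 * y t^2 * (N2 t - N3 t)^2/(N2 t + N3 t)^2)"
  have dM: "(M has_real_derivative M' t) (at t)" for t unfolding M_def M'_def by (rule der(3))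
  have M'pos: "0 \<le> M' t" for t unfolding M'_def by (rule Mpos[OF s3(1) s3(2) con[of t] Spos[of t] rp[of t]])
  have Mmono: "M u \<le> M v" if "u \<le> v" for u v by (rule mono_up[OF dM M'pos order_refl that])
  have MW: "ln (N2 t * N3 t) = M t + W t / sqrt 3" for t unfolding M_def W_def by simp
  define c0 where "c0 = exp (M 0 - 1)"
  have c0p: "0 < c0" unfolding c0_def by simp
  have Pc0: "c0 \<le> N2 t * N3 t" if "0 \<le> t" for t
  proof -
    have "\<bar>W t\<bar> \<le> sqrt 3" using W1[of t] s3(3) by linarith
    then have "\<bar>W t / sqrt 3\<bar> \<le> 1" by (simp add: abs_divide divide_le_eq)
    then have "M 0 - 1 \<le> ln (N2 t * N3 t)" unfolding MW using Mmono[OF that] by linarith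
    then show ?thesis unfolding c0_def using Pp[of t] by (metis exp_le_cancel_iff exp_ln)
  qed
  have xmono: "x v \<le> x u" if "u \<le> v" for u v
  proof (rule mono_down[OF dx _ order_refl that])
    fix t
    have "0 \<le> (N2 t - N3 t)^2 * (1 + x t)" using rp[of t] by simp
    then show "-(3/2)*(N2 t - N3 t)^2 * (1 + x t) \<le> 0" by (simp add: mult.commute)
  qed
  have stepD: "\<exists>T\<ge>0. \<forall>t\<ge>T. 1 + x t \<le> 3 * (N2 t * N3 t)"
  proof (cases "\<exists>t0\<ge>0. 1 + x t0 < 3*c0")
    case True
    then obtain t0 where t0: "0 \<le> t0" "1 + x t0 < 3*c0" by auto
    show ?thesis
    proof (intro exI[of _ t0] conjI allI impI)
      show "0 \<le> t0" by fact
      fix t assume tt: "t0 \<le> t"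
      then have "x t \<le> x t0" by (rule xmono)
      moreover have "c0 \<le> N2 t * N3 t" using Pc0 t0(1) tt by simp
      ultimately show "1 + x t \<le> 3*(N2 t*N3 t)" using t0 by linarith
    qed
  next
    case False
    define e where "e = 3*c0"
    have low: "e \<le> 1 + x t" if "0 \<le> t" for t using False that unfolding e_def by (meson not_less)
    have ep: "0 < e" using c0p e_def by simp
    define LZ where "LZ = (\<lambda>t. ln (N2 t * N3 t) - 2 * ln (1 + x t))"
    have d4: "((\<lambda>t. 4*e*t) has_real_derivative 4*e) (at t)" for t by (auto intro!: derivative_eq_intros)
    have dLZ: "((\<lambda>t. LZ t - 4*e*t) has_real_derivative (4*(1 + x t) - 4*e)) (at t)" for t
      unfolding LZ_def by (rule DERIV_diff[OF der(2) d4])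
    have LZgrow: "LZ 0 + 4*e*t \<le> LZ t" if "0 \<le> t" for t
    proof -
      have "LZ 0 - 4*e*0 \<le> LZ t - 4*e*t"
        by (rule mono_up[OF dLZ _ order_refl that]) (use low in force)
      then show ?thesis by simp
    qed
    define T where "T = max 0 ((- ln e - LZ 0)/(4*e))"
    show ?thesis
    proof (intro exI[of _ T] conjI allI impI)
      show "0 \<le> T" unfolding T_def by simp
      fix t assume tT: "T \<le> t"
      have t0: "0 \<le> t" using tT unfolding T_def by simp
      have "(- ln e - LZ 0)/(4*e) \<le> t" using tT unfolding T_def by simp
      then have "- ln e - LZ 0 \<le> t * (4*e)" using ep by (simp add: divide_le_eq)
      then have "- ln e \<le> LZ t" using LZgrow[OF t0] by (simp add: algebra_simps)
      then have "exp (- ln e) \<le> exp (LZ t)" by simp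
      moreover have "exp (- ln e) = 1/e" using ep by (simp add: exp_minus inverse_eq_divide)
      moreover have "exp (LZ t) = N2 t * N3 t / (1 + x t)^2"
      proof -
        have "2 * ln (1 + x t) = ln ((1 + x t)^2)" using ln_realpow[of "1 + x t" 2] by simp
        then show ?thesis unfolding LZ_def using Pp[of t] rp[of t] by (simp add: exp_diff)
      qed
      ultimately have A: "1/e \<le> N2 t * N3 t / (1 + x t)^2" by simp
      have "(1 + x t)^2 / e \<le> N2 t * N3 t" using A ep rp[of t] by (simp add: field_simps)
      moreover have "1 + x t \<le> (1 + x t)^2 / e"
      proof -
        have "e*(1 + x t) \<le> (1 + x t)*(1 + x t)" by (rule mult_right_mono[OF low[OF t0]]) (use rp[of t] in simp)
        then show ?thesis using ep by (simp add: field_simps power2_eq_square)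
      qed
      ultimately show "1 + x t \<le> 3 * (N2 t * N3 t)" using Pp[of t] by linarith
    qed
  qed
  obtain T where T: "0 \<le> T" "\<And>t. T \<le> t \<Longrightarrow> 1 + x t \<le> 3*(N2 t * N3 t)" using stepD by auto
  define G where "G = (\<lambda>t. 1/(1 + x t) + y t * (N2 t - N3 t) / (2 * sqrt 3 * (1 + x t) * (N2 t + N3 t)))"
  define G' where "G' = (\<lambda>t. (y t^2 + 3/4*(N2 t - N3 t)^2)/(1 + x t) - y t^2 * (N2 t - N3 t)^2 / ((N2 t + N3 t)^2 * (1 + x t)))"
  have dG: "(G has_real_derivative G' t) (at t)" for t unfolding G_def G'_def by (rule der(1))
  define cc where "cc = (1 - x 0)/2"
  have ccp: "0 < cc" using xb[of 0] unfolding cc_def by simp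
  have G'low: "cc \<le> G' t" if "T \<le> t" for t
  proof -
    have t0: "0 \<le> t" using T(1) that by linarith
    have S2: "4/3*(1 + x t) \<le> (N2 t + N3 t)^2" using T(2)[OF that] S4[of t] by (simp only: ring_distribs; linarith)
    have "(1 - x t)/2 \<le> G' t" unfolding G'_def by (rule Glow[OF con[of t] rp[of t] _ S2]) (use xb[of t] in auto)
    moreover have "x t \<le> x 0" by (rule xmono[OF t0])
    ultimately show ?thesis unfolding cc_def by (smt (verit) divide_right_mono)
  qed
  have Gform: "G t = (1 + W t/(2* sqrt 3)) / (1 + x t)" for t
    unfolding G_def W_def by (rule Gform_gen) (use rp[of t] Spos[of t] in auto)
  have Gb: "1/2/(1 + x t) \<le> G t \<and> G t \<le> 3/2/(1 + x t)" for t
  proof -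
    have "\<bar>W t\<bar> \<le> sqrt 3" using W1[of t] s3(3) by linarith
    then have "\<bar>W t/(2 * sqrt 3)\<bar> \<le> 1/2" by (simp add: abs_divide divide_le_eq)
    moreover define v where "v = W t/(2 * sqrt 3)"
    ultimately have "\<bar>v\<bar> \<le> 1/2" by simp
    then have "1/2 \<le> 1 + v" "1 + v \<le> 3/2" by (simp_all add: abs_le_iff)
    then have h: "1/2 \<le> 1 + W t/(2 * sqrt 3)" "1 + W t/(2 * sqrt 3) \<le> 3/2" unfolding v_def by simp_all
    have rr: "0 \<le> 1 + x t" using rp[of t] by simp
    show ?thesis unfolding Gform using divide_right_mono[OF h(1) rr] divide_right_mono[OF h(2) rr] by simp
  qed
  have Gpos: "0 < G t" for t using Gb[of t] rp[of t] by (smt (verit) divide_pos_pos)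
  have rG: "1 + x t \<le> 3/2 / G t" for t
    using Gb[of t] rp[of t] Gpos[of t] by (simp add: field_simps)
  have d5: "((\<lambda>t. cc*t) has_real_derivative cc) (at t)" for t by (auto intro!: derivative_eq_intros)
  have Ggrow: "G T + cc*(t - T) \<le> G t" if "T \<le> t" for t
  proof -
    have "G T - cc*T \<le> G t - cc*t"
      by (rule mono_up[OF DERIV_diff[OF dG d5] _ order_refl that]) (use G'low in auto)
    then show ?thesis by (simp add: algebra_simps)
  qed
  define CM where "CM = 6 + 4/c0"
  have CMp: "0 \<le> CM" unfolding CM_def using c0p by simp
  have M'up: "M' t \<le> CM*(1 + x t)^2" if "0 \<le> t" for t unfolding M'_def CM_def
    by (rule Mup[OF s3(1) s3(2) con[of t] Spos[of t] rp[of t] c0p]) (use S4[of t] Pc0[OF that] in linarith)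
  define K2 where "K2 = 9/4*CM/cc"
  have K2p: "0 \<le> K2" unfolding K2_def using CMp ccp by simp
  define H where "H = (\<lambda>t. M t + K2 / G t)"
  have dH: "(H has_real_derivative (M' t + (0 * G t - K2 * G' t)/(G t * G t))) (at t)" for t
    unfolding H_def by (rule DERIV_add[OF dM DERIV_divide[OF DERIV_const dG]]) (use Gpos[of t] in simp)
  have H'neg: "M' t + (0 * G t - K2 * G' t)/(G t * G t) \<le> 0" if "T \<le> t" for t
  proof -
    have t0: "0 \<le> t" using T(1) that by linarith
    have g: "0 < G t * G t" using Gpos[of t] by simp
    have b: "(1 + x t)^2 \<le> (3/2/G t)^2" by (rule power_mono[OF rG]) (use rp[of t] in simp)
    have c: "(3/2/G t)^2 = 9/4/(G t * G t)" by (simp add: power2_eq_square)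
    have e1: "M' t \<le> CM * (9/4/(G t * G t))"
      using M'up[OF t0] mult_left_mono[OF b CMp] unfolding c by linarith
    have "K2 * cc \<le> K2 * G' t" by (rule mult_left_mono[OF G'low[OF that] K2p])
    moreover have "K2 * cc = 9/4*CM" unfolding K2_def using ccp by simp
    ultimately have k: "9/4*CM \<le> K2 * G' t" by linarith
    have "9/4*CM / (G t * G t) \<le> K2 * G' t / (G t * G t)" by (rule divide_right_mono[OF k]) (use g in simp)
    moreover have "(0 * G t - K2 * G' t)/(G t * G t) = - (K2 * G' t / (G t * G t))" by simp
    moreover have "CM * (9/4/(G t * G t)) = 9/4*CM / (G t * G t)" by simp
    ultimately show ?thesis using e1 by linarith
  qed
  have HT: "H t \<le> H T" if "T \<le> t" for t
    by (rule mono_down[OF dH H'neg order_refl that])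
  have K2G: "0 \<le> K2 / G t" for t using K2p Gpos[of t] by simp
  have MB: "M t \<le> H T" for t
  proof (cases "t \<le> T")
    case True
    then show ?thesis using Mmono[OF True] K2G[of T] unfolding H_def by linarith
  next
    case False
    then show ?thesis using HT[of t] K2G[of t] unfolding H_def by linarith
  qed
  define Ml where "Ml = Sup (range M)"
  have bdd: "bdd_above (range M)" by (rule bdd_aboveI2[of UNIV M "H T"]) (rule MB)
  have Mlim: "(M \<longlongrightarrow> Ml) at_top"
  proof (rule order_tendstoI)
    fix a assume "a < Ml"
    then obtain t0 where t0: "a < M t0" using less_cSup_iff[of "range M" a] bdd unfolding Ml_def by auto
    show "eventually (\<lambda>t. a < M t) at_top" unfolding eventually_at_top_linorder
      using t0 Mmono by (meson less_le_trans)
  next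
    fix a assume a: "Ml < a"
    have "M t \<le> Ml" for t unfolding Ml_def by (rule cSup_upper[OF _ bdd]) simp
    then have "\<forall>t. M t < a" using a by (meson le_less_trans)
    then show "eventually (\<lambda>t. M t < a) at_top" by (rule always_eventually)
  qed
  have rlim: "((\<lambda>t. 1 + x t) \<longlongrightarrow> 0) at_top"
  proof (rule order_tendstoI)
    fix a :: real assume "a < 0"
    then have "\<forall>t. a < 1 + x t" using rp by (meson less_trans)
    then show "eventually (\<lambda>t. a < 1 + x t) at_top" by (rule always_eventually)
  next
    fix a :: real assume a: "0 < a"
    show "eventually (\<lambda>t. 1 + x t < a) at_top" unfolding eventually_at_top_linorder
    proof (intro exI[of _ "T + 3/(2*cc*a) + 1"] allI impI)
      fix t assume tt: "T + 3/(2*cc*a) + 1 \<le> t"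
      then have tT: "T \<le> t" using ccp a by (smt (verit) divide_pos_pos mult_pos_pos)
      have "3/(2*cc*a) + 1 \<le> t - T" using tt by linarith
      then have "cc * (3/(2*cc*a) + 1) \<le> cc*(t - T)" using ccp by (simp add: mult_left_mono)
      moreover have "cc * (3/(2*cc*a) + 1) = 3/(2*a) + cc" using ccp by (simp add: field_simps)
      ultimately have "3/(2*a) < cc*(t - T)" using ccp by linarith
      then have "3/(2*a) < G t" using Ggrow[OF tT] Gpos[of T] by linarith
      then have "3/2 / G t < a" using a Gpos[of t] by (simp add: field_simps)
      then show "1 + x t < a" using rG[of t] by linarith
    qed
  qed
  have sq0: "((\<lambda>t. sqrt (k * (1 + x t))) \<longlongrightarrow> 0) at_top" for k :: real
    using tendsto_real_sqrt[OF tendsto_mult[OF tendsto_const rlim, of k]] by simp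
  have Wlim: "(W \<longlongrightarrow> 0) at_top"
  proof (rule Lim_null_comparison[OF _ sq0[of 2]])
    show "eventually (\<lambda>t. norm (W t) \<le> sqrt (2 * (1 + x t))) at_top"
    proof (intro always_eventually allI)
      fix t
      have "\<bar>y t\<bar> \<le> sqrt (2 * (1 + x t))" by (rule abs_le_sqrt[OF bb(1)])
      then show "norm (W t) \<le> sqrt (2 * (1 + x t))" using Wy[of t] by simp
    qed
  qed
  have Dlim: "((\<lambda>t. N2 t - N3 t) \<longlongrightarrow> 0) at_top"
  proof (rule Lim_null_comparison[OF _ sq0[of "8/3"]])
    show "eventually (\<lambda>t. norm (N2 t - N3 t) \<le> sqrt (8/3 * (1 + x t))) at_top"
      using abs_le_sqrt[OF bb(2)] by (auto intro: always_eventually)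
  qed
  have Llim: "((\<lambda>t. ln (N2 t * N3 t)) \<longlongrightarrow> Ml) at_top"
    using tendsto_add[OF Mlim tendsto_divide[OF Wlim tendsto_const, of "sqrt 3"]] unfolding MW by simp
  have Plim: "((\<lambda>t. N2 t * N3 t) \<longlongrightarrow> exp Ml) at_top"
    using tendsto_exp[OF Llim] Pp by simp
  have Sform: "N2 t + N3 t = sqrt (4 * (N2 t * N3 t) + (N2 t - N3 t)^2)" for t
  proof -
    have "4 * (N2 t * N3 t) + (N2 t - N3 t)^2 = (N2 t + N3 t)^2" by (simp add: power2_eq_square algebra_simps)
    then show ?thesis using Spos[of t] by simp
  qed
  have Slim: "((\<lambda>t. N2 t + N3 t) \<longlongrightarrow> sqrt (4 * exp Ml)) at_top"
  proof -
    have "((\<lambda>t. sqrt (4 * (N2 t * N3 t) + (N2 t - N3 t)^2)) \<longlongrightarrow> sqrt (4 * exp Ml + 0^2)) at_top"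
      by (intro tendsto_intros Plim Dlim)
    then show ?thesis using Sform by simp
  qed
  define n0 where "n0 = sqrt (4 * exp Ml) / 2"
  have n0p: "0 < n0" unfolding n0_def by simp
  have N2f: "N2 t = ((N2 t + N3 t) + (N2 t - N3 t))/2" for t by simp
  have N3f: "N3 t = ((N2 t + N3 t) - (N2 t - N3 t))/2" for t by simp
  have L2: "(N2 \<longlongrightarrow> n0) at_top"
  proof -
    have "((\<lambda>t. ((N2 t + N3 t) + (N2 t - N3 t))/2) \<longlongrightarrow> (sqrt (4 * exp Ml) + 0)/2) at_top"
      by (intro tendsto_intros Slim Dlim) simp
    then show ?thesis unfolding n0_def by simp
  qed
  have L3: "(N3 \<longlongrightarrow> n0) at_top"
  proof -
    have "((\<lambda>t. ((N2 t + N3 t) - (N2 t - N3 t))/2) \<longlongrightarrow> (sqrt (4 * exp Ml) - 0)/2) at_top"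
      by (intro tendsto_intros Slim Dlim) simp
    then show ?thesis unfolding n0_def by simp
  qed
  show ?thesis using n0p L2 L3 by blast
qed

theorem mainTheorem9:
  fixes N1 N2 N3 Sp Sm :: "real \<Rightarrow> real"
  assumes "WH_solution N1 N2 N3 Sp Sm"
    and "\<forall>t. N1 t = 0"
    and "\<forall>t. N2 t > 0 \<and> N3 t > 0"
    and "\<forall>t. (Sm t)^2 + (N2 t - N3 t)^2 > 0"
  shows "\<exists>n0 > 0. (N2 \<longlongrightarrow> n0) at_top \<and> (N3 \<longlongrightarrow> n0) at_top"
proof -
  have raw: "(N2 has_real_derivative ((wh_q (Sp t) (Sm t) + 2 * Sp t + 2 * sqrt 3 * Sm t) * N2 t)) (at t) \<and>
     (N3 has_real_derivative ((wh_q (Sp t) (Sm t) + 2 * Sp t - 2 * sqrt 3 * Sm t) * N3 t)) (at t) \<and>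
     (Sp has_real_derivative (- (2 - wh_q (Sp t) (Sm t)) * Sp t - 3 * wh_Splus (N1 t) (N2 t) (N3 t))) (at t) \<and>
     (Sm has_real_derivative (- (2 - wh_q (Sp t) (Sm t)) * Sm t - 3 * wh_Sminus (N1 t) (N2 t) (N3 t))) (at t) \<and>
     (Sp t)^2 + (Sm t)^2 + (3/4) * ((N1 t)^2 + (N2 t)^2 + (N3 t)^2
        - 2 * (N1 t * N2 t + N2 t * N3 t + N1 t * N3 t)) = 1" for t
    using assms(1) unfolding WH_solution_def Let_def by blast
  have n1: "N1 t = 0" for t using assms(2) by simp
  have con: "Sp t^2 + Sm t^2 + 3/4*(N2 t - N3 t)^2 = 1" for t
  proof -
    have "(N1 t)^2 + (N2 t)^2 + (N3 t)^2 - 2 * (N1 t * N2 t + N2 t * N3 t + N1 t * N3 t) = (N2 t - N3 t)^2"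
      unfolding n1 by (simp add: power2_eq_square algebra_simps)
    then show ?thesis using raw[of t] by simp
  qed
  have eq: "wh_q (Sp t) (Sm t) = 2 - 3/2*(N2 t - N3 t)^2" for t
    using con[of t] unfolding wh_q_def by (simp add: field_simps)
  have dN2: "(N2 has_real_derivative ((2 - 3/2*(N2 t - N3 t)^2 + 2*Sp t + 2 * sqrt 3 * Sm t)*N2 t)) (at t)" for t
    using raw[of t] unfolding eq by blast
  have dN3: "(N3 has_real_derivative ((2 - 3/2*(N2 t - N3 t)^2 + 2*Sp t - 2 * sqrt 3 * Sm t)*N3 t)) (at t)" for t
    using raw[of t] unfolding eq by blast
  have dx: "(Sp has_real_derivative (-(3/2)*(N2 t - N3 t)^2 * (1 + Sp t))) (at t)" for t
  proof (rule DERIV_cong)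
    show "(Sp has_real_derivative (- (2 - wh_q (Sp t) (Sm t)) * Sp t - 3 * wh_Splus (N1 t) (N2 t) (N3 t))) (at t)"
      using raw[of t] by blast
    show "- (2 - wh_q (Sp t) (Sm t)) * Sp t - 3 * wh_Splus (N1 t) (N2 t) (N3 t) = -(3/2)*(N2 t - N3 t)^2 * (1 + Sp t)"
      unfolding eq wh_Splus_def n1 by (simp add: algebra_simps)
  qed
  have dy: "(Sm has_real_derivative (-(3/2)*(N2 t - N3 t)^2*Sm t - (3 * sqrt 3/2)*(N2 t - N3 t)*(N2 t + N3 t))) (at t)" for t
  proof (rule DERIV_cong)
    show "(Sm has_real_derivative (- (2 - wh_q (Sp t) (Sm t)) * Sm t - 3 * wh_Sminus (N1 t) (N2 t) (N3 t))) (at t)"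
      using raw[of t] by blast
    show "- (2 - wh_q (Sp t) (Sm t)) * Sm t - 3 * wh_Sminus (N1 t) (N2 t) (N3 t) = -(3/2)*(N2 t - N3 t)^2*Sm t - (3 * sqrt 3/2)*(N2 t - N3 t)*(N2 t + N3 t)"
      unfolding eq wh_Sminus_def n1 by (simp add: algebra_simps)
  qed
  show ?thesis
    by (rule core[OF dN2 dN3 dx dy _ _ con]) (use assms(3,4) in auto)
qed

end
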